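(* Let $f$ be a real analytic function on an open neighborhood of $0\in\mathbb{R}^n$ with $f(0)=0$ and $f\not\equiv 0$. Then for every open neighborhood $\mathcal{U}$ of $0$ contained in the domain of $f$, \[ \int_{\mathcal{U}} \left|\frac{\nabla f}{f}\right|^n \, dV(x) = \infty. \] *)

theory Defs
  imports "HOL-Analysis.Analysis"
begin

definition monomial_at :: "('n::finite \<Rightarrow> nat) \<Rightarrow> real^'n \<Rightarrow> real^'n \<Rightarrow> real" where
  "monomial_at \<alpha> a x = (\<Prod>i\<in>UNIV. (x$i - a$i) ^ (\<alpha> i))"

text \<open>f is real analytic at a: on some neighbourhood of a, f is the sum of a
 convergent (absolutely, i.e. unconditionally) multivariate power series centred at a.\<close>
definition real_analytic_at :: "(real^'n::finite \<Rightarrow> real) \<Rightarrow> real^'n \<Rightarrow> bool" where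
  "real_analytic_at f a \<longleftrightarrow>
     (\<exists>r>0. \<exists>c :: ('n \<Rightarrow> nat) \<Rightarrow> real.
        \<forall>x\<in>ball a r. ((\<lambda>\<alpha>. c \<alpha> * monomial_at \<alpha> a x) has_sum f x) UNIV)"

definition real_analytic_on :: "(real^'n::finite \<Rightarrow> real) \<Rightarrow> (real^'n) set \<Rightarrow> bool" where
  "real_analytic_on f D \<longleftrightarrow> (\<forall>a\<in>D. real_analytic_at f a)"

definition grad :: "(real^'n::finite \<Rightarrow> real) \<Rightarrow> real^'n \<Rightarrow> real^'n" where
  "grad f x = (\<chi> i. frechet_derivative f (at x) (axis i 1))"

end

theory Submission
  imports Defs
begin

definition hpoly :: "(('n::finite \<Rightarrow> nat) \<Rightarrow> real) \<Rightarrow> nat \<Rightarrow> real^'n \<Rightarrow> real" where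
  "hpoly c j h = (\<Sum>\<alpha>\<in>{\<alpha>. sum \<alpha> UNIV = j}. c \<alpha> * monomial_at \<alpha> 0 h)"

definition bnd :: "(('n::finite \<Rightarrow> nat) \<Rightarrow> real) \<Rightarrow> nat \<Rightarrow> real" where
  "bnd c j = (\<Sum>\<alpha>\<in>{\<alpha>. sum \<alpha> UNIV = j}. \<bar>c \<alpha>\<bar>)"

lemma finite_deg: "finite {\<alpha>::'n::finite \<Rightarrow> nat. sum \<alpha> UNIV = j}"
proof -
  have "{\<alpha>::'n \<Rightarrow> nat. sum \<alpha> UNIV = j} \<subseteq> PiE UNIV (\<lambda>_. {..j})"
    by (auto simp: PiE_def Pi_def extensional_def intro!: member_le_sum)
  moreover have "finite (PiE (UNIV::'n set) (\<lambda>_. {..j}))" by (rule finite_PiE) auto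
  ultimately show ?thesis by (rule finite_subset)
qed

lemma monomial_shift: "monomial_at \<alpha> a (a + h) = monomial_at \<alpha> 0 h"
  by (simp add: monomial_at_def)

lemma monomial_scale: "monomial_at \<alpha> 0 (t *\<^sub>R h) = t ^ sum \<alpha> UNIV * monomial_at \<alpha> 0 h"
  by (simp add: monomial_at_def power_mult_distrib prod.distrib power_sum)

lemma hpoly_scale: "hpoly c j (t *\<^sub>R h) = t ^ j * hpoly c j h"
  unfolding hpoly_def by (simp add: monomial_scale sum_distrib_left mult_ac)

lemma monomial_bound: "\<bar>monomial_at \<alpha> 0 h\<bar> \<le> norm h ^ sum \<alpha> UNIV"
proof -
  have "\<bar>monomial_at \<alpha> 0 h\<bar> = (\<Prod>i\<in>UNIV. \<bar>h$i\<bar> ^ \<alpha> i)"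
    by (simp add: monomial_at_def abs_prod power_abs)
  also have "\<dots> \<le> (\<Prod>i\<in>UNIV. norm h ^ \<alpha> i)"
    by (intro prod_mono conjI power_mono) (auto simp: component_le_norm_cart)
  also have "\<dots> = norm h ^ sum \<alpha> UNIV" by (simp add: power_sum)
  finally show ?thesis .
qed

lemma hpoly_bound: "\<bar>hpoly c j h\<bar> \<le> bnd c j * norm h ^ j"
proof -
  have "\<bar>hpoly c j h\<bar> \<le> (\<Sum>\<alpha>\<in>{\<alpha>. sum \<alpha> UNIV = j}. \<bar>c \<alpha>\<bar> * \<bar>monomial_at \<alpha> 0 h\<bar>)"
    unfolding hpoly_def by (rule order_trans[OF sum_abs]) (simp add: abs_mult)
  also have "\<dots> \<le> (\<Sum>\<alpha>\<in>{\<alpha>. sum \<alpha> UNIV = j}. \<bar>c \<alpha>\<bar> * norm h ^ j)"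
    by (intro sum_mono mult_left_mono) (auto intro: order_trans[OF monomial_bound])
  finally show ?thesis by (simp add: bnd_def sum_distrib_right)
qed

lemma bnd_nonneg: "bnd c j \<ge> 0" by (simp add: bnd_def sum_nonneg)

lemma hpoly_cont: "continuous_on UNIV (hpoly c j)"
  unfolding hpoly_def monomial_at_def
  by (intro continuous_intros)

lemma group_series:
  fixes c :: "('n::finite \<Rightarrow> nat) \<Rightarrow> real"
  assumes "((\<lambda>\<alpha>. c \<alpha> * monomial_at \<alpha> 0 h) has_sum s) UNIV"
  shows "(\<lambda>j. hpoly c j h) sums s"
proof -
  let ?B = "\<lambda>j. {\<alpha>::'n \<Rightarrow> nat. sum \<alpha> UNIV = j}"
  let ?F = "\<lambda>p. c (snd p) * monomial_at (snd p) 0 h"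
  have bij: "bij_betw (\<lambda>\<alpha>. (sum \<alpha> UNIV, \<alpha>)) UNIV (Sigma UNIV ?B)"
    by (rule bij_betwI[where g=snd]) auto
  have "((\<lambda>\<alpha>. ?F (sum \<alpha> UNIV, \<alpha>)) has_sum s) UNIV" using assms by simp
  then have "(?F has_sum s) (Sigma UNIV ?B)"
    using has_sum_reindex_bij_betw[OF bij, of ?F s] by simp
  then have "((\<lambda>j. hpoly c j h) has_sum s) UNIV"
  proof (rule has_sum_SigmaD)
    fix j :: nat
    show "((\<lambda>\<alpha>. ?F (j, \<alpha>)) has_sum hpoly c j h) (?B j)"
    proof -
      have "((\<lambda>\<alpha>. c \<alpha> * monomial_at \<alpha> 0 h) has_sum hpoly c j h) (?B j)"
        unfolding hpoly_def by (rule has_sum_finite[OF finite_deg])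
      then show ?thesis by simp
    qed
  qed
  then show ?thesis by (rule has_sum_imp_sums)
qed

lemma monomial_const: "monomial_at \<alpha> 0 (\<chi> i. \<rho>) = \<rho> ^ sum \<alpha> UNIV"
  by (simp add: monomial_at_def power_sum)

lemma hpoly_abs_const: "\<rho> \<ge> 0 \<Longrightarrow> hpoly (\<lambda>\<alpha>. \<bar>c \<alpha>\<bar>) j (\<chi> i. \<rho>) = bnd c j * \<rho> ^ j"
  unfolding hpoly_def bnd_def by (simp add: monomial_const sum_distrib_right)

lemma norm_const_vec: "\<rho> \<ge> 0 \<Longrightarrow> norm ((\<chi> i. \<rho>) :: real^'n::finite) \<le> \<rho> * CARD('n)"
proof -
  assume "\<rho> \<ge> 0"
  have "norm ((\<chi> i. \<rho>) :: real^'n) \<le> (\<Sum>i\<in>UNIV. \<bar>(\<chi> i. \<rho>) $ (i::'n)\<bar>)"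
    by (rule norm_le_l1_cart)
  also have "\<dots> = \<rho> * CARD('n)" using \<open>\<rho> \<ge> 0\<close> by simp
  finally show ?thesis .
qed

lemma analytic_expansion:
  fixes f :: "real^'n::finite \<Rightarrow> real"
  assumes "real_analytic_at f a"
  obtains \<rho> c where "\<rho> > 0" "summable (\<lambda>j. bnd c j * \<rho> ^ j)"
    "\<And>h. norm h < \<rho> \<Longrightarrow> (\<lambda>j. hpoly c j h) sums f (a + h)"
proof -
  from assms obtain r c where r: "r > 0"
    and hs: "\<And>x. x \<in> ball a r \<Longrightarrow> ((\<lambda>\<alpha>. c \<alpha> * monomial_at \<alpha> a x) has_sum f x) UNIV"
    unfolding real_analytic_at_def by blast
  define \<rho> where "\<rho> = r / (2 * CARD('n))"
  have \<rho>: "\<rho> > 0" using r by (simp add: \<rho>_def)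
  have \<rho>r: "\<rho> * CARD('n) < r" using r by (simp add: \<rho>_def field_simps)
  have "1 \<le> real CARD('n)" by simp
  then have "\<rho> * 1 \<le> \<rho> * CARD('n)" using \<rho> by (intro mult_left_mono) auto
  then have \<rho>r': "\<rho> < r" using \<rho>r by simp
  have ser: "(\<lambda>j. hpoly c j h) sums f (a + h)" if "norm h < r" for h
  proof -
    have "a + h \<in> ball a r" using that by (simp add: dist_norm)
    from hs[OF this] have "((\<lambda>\<alpha>. c \<alpha> * monomial_at \<alpha> 0 h) has_sum f (a + h)) UNIV"
      unfolding monomial_shift .
    then show ?thesis by (rule group_series)
  qed
  define p where "p = ((\<chi> i. \<rho>) :: real^'n)"
  have "norm p < r" using norm_const_vec[of \<rho>, where 'n='n] \<rho> \<rho>r by (simp add: p_def)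
  then have "a + p \<in> ball a r" by (simp add: dist_norm)
  from hs[OF this] have "(\<lambda>\<alpha>. c \<alpha> * monomial_at \<alpha> 0 p) summable_on UNIV"
    unfolding monomial_shift by (rule has_sum_imp_summable)
  then have "(\<lambda>\<alpha>. norm (c \<alpha> * monomial_at \<alpha> 0 p)) summable_on UNIV"
    by (rule summable_on_iff_abs_summable_on_real[THEN iffD1])
  then have "((\<lambda>\<alpha>. \<bar>c \<alpha>\<bar> * monomial_at \<alpha> 0 p) has_sum (infsum (\<lambda>\<alpha>. norm (c \<alpha> * monomial_at \<alpha> 0 p)) UNIV)) UNIV"
    using \<rho> by (simp add: p_def monomial_const abs_mult has_sum_infsum)
  from group_series[OF this] have "summable (\<lambda>j. hpoly (\<lambda>\<alpha>. \<bar>c \<alpha>\<bar>) j p)"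
    by (rule sums_summable)
  then have sb: "summable (\<lambda>j. bnd c j * \<rho> ^ j)"
    unfolding p_def using hpoly_abs_const[of \<rho> c] \<rho> by simp
  show ?thesis
  proof (rule that[OF \<rho> sb])
    fix h :: "real^'n" assume "norm h < \<rho>"
    then show "(\<lambda>j. hpoly c j h) sums f (a + h)" using ser \<rho>r' by (intro ser) linarith
  qed
qed


lemma nat_le_two_pow: "real n \<le> 2 ^ n"
proof -
  have "n < 2 ^ n" by (rule less_exp)
  then have "real n \<le> real (2 ^ n)" by simp
  then show ?thesis by simp
qed

lemma tail_bound:
  assumes sb: "summable (\<lambda>j. bnd c j * \<rho> ^ j)" and \<rho>: "\<rho> > 0" and h: "norm h \<le> \<rho> / 2"
  shows "summable (\<lambda>j. real (j+m) * bnd c (j+m) * norm h ^ (j+m))"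
    and "(\<Sum>j. real (j+m) * bnd c (j+m) * norm h ^ (j+m)) \<le> norm h ^ m * (2/\<rho>) ^ m * (\<Sum>j. bnd c j * \<rho> ^ j)"
proof -
  define g where "g j = norm h ^ m * (2/\<rho>) ^ m * (bnd c (j+m) * \<rho> ^ (j+m))" for j
  have sg0: "summable (\<lambda>j. bnd c (j+m) * \<rho> ^ (j+m))"
    using summable_ignore_initial_segment[OF sb, of m] by simp
  then have sg: "summable g" unfolding g_def by (rule summable_mult)
  have le: "real (j+m) * bnd c (j+m) * norm h ^ (j+m) \<le> g j" for j
  proof -
    have "norm h ^ j \<le> (\<rho>/2) ^ j" by (intro power_mono) (use h in auto)
    then have "real (j+m) * norm h ^ j \<le> 2 ^ (j+m) * (\<rho>/2) ^ j"
      by (intro mult_mono nat_le_two_pow) auto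
    also have "\<dots> = 2 ^ m * \<rho> ^ j" by (simp add: power_add power_divide)
    finally have k: "real (j+m) * norm h ^ j \<le> 2 ^ m * \<rho> ^ j" .
    have "real (j+m) * bnd c (j+m) * norm h ^ (j+m) = (bnd c (j+m) * norm h ^ m) * (real (j+m) * norm h ^ j)"
      by (simp add: power_add mult_ac)
    also have "\<dots> \<le> (bnd c (j+m) * norm h ^ m) * (2 ^ m * \<rho> ^ j)"
      by (intro mult_left_mono k) (simp add: bnd_nonneg)
    also have "\<dots> = g j" using \<rho> by (simp add: g_def power_add power_divide field_simps)
    finally show ?thesis .
  qed
  have nn: "0 \<le> real (j+m) * bnd c (j+m) * norm h ^ (j+m)" for j by (simp add: bnd_nonneg)
  show s: "summable (\<lambda>j. real (j+m) * bnd c (j+m) * norm h ^ (j+m))"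
    by (rule summable_comparison_test'[OF sg]) (use le nn in auto)
  have "(\<Sum>j. real (j+m) * bnd c (j+m) * norm h ^ (j+m)) \<le> suminf g"
    by (rule suminf_le[OF le s sg])
  also have "suminf g = norm h ^ m * (2/\<rho>) ^ m * (\<Sum>j. bnd c (j+m) * \<rho> ^ (j+m))"
    unfolding g_def using suminf_mult[OF sg0, of "norm h ^ m * (2/\<rho>) ^ m"] by simp
  also have "(\<Sum>j. bnd c (j+m) * \<rho> ^ (j+m)) \<le> (\<Sum>j. bnd c j * \<rho> ^ j)"
  proof -
    have "(\<Sum>j. bnd c j * \<rho> ^ j) = (\<Sum>j. bnd c (j+m) * \<rho> ^ (j+m)) + (\<Sum>j<m. bnd c j * \<rho> ^ j)"
      by (rule suminf_split_initial_segment[OF sb])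
    moreover have "(\<Sum>j<m. bnd c j * \<rho> ^ j) \<ge> 0" using \<rho> by (intro sum_nonneg) (simp add: bnd_nonneg)
    ultimately show ?thesis by simp
  qed
  then have "norm h ^ m * (2/\<rho>) ^ m * (\<Sum>j. bnd c (j+m) * \<rho> ^ (j+m)) \<le> norm h ^ m * (2/\<rho>) ^ m * (\<Sum>j. bnd c j * \<rho> ^ j)"
    by (intro mult_left_mono) (use \<rho> in auto)
  finally show "(\<Sum>j. real (j+m) * bnd c (j+m) * norm h ^ (j+m)) \<le> norm h ^ m * (2/\<rho>) ^ m * (\<Sum>j. bnd c j * \<rho> ^ j)" .
qed


lemma rem_bound:
  assumes sb: "summable (\<lambda>j. bnd c j * \<rho> ^ j)" and \<rho>: "\<rho> > 0" and h: "norm h \<le> \<rho> / 2"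
    and m: "m \<ge> 1" and S: "(\<lambda>j. w j * hpoly c (j+m) h) sums S" and w: "\<And>j. \<bar>w j\<bar> \<le> real (j+m)"
  shows "\<bar>S\<bar> \<le> norm h ^ m * (2/\<rho>) ^ m * (\<Sum>j. bnd c j * \<rho> ^ j)"
proof -
  have "\<bar>S\<bar> \<le> (\<Sum>j. real (j+m) * bnd c (j+m) * norm h ^ (j+m))"
  proof (rule norm_sums_le[OF S summable_sums[OF tail_bound(1)[OF sb \<rho> h]], unfolded real_norm_def])
    fix j
    have "\<bar>w j * hpoly c (j+m) h\<bar> = \<bar>w j\<bar> * \<bar>hpoly c (j+m) h\<bar>" by (simp add: abs_mult)
    also have "\<dots> \<le> real (j+m) * (bnd c (j+m) * norm h ^ (j+m))"
      by (intro mult_mono w hpoly_bound) auto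
    finally show "\<bar>w j * hpoly c (j+m) h\<bar> \<le> real (j+m) * bnd c (j+m) * norm h ^ (j+m)" by (simp add: mult_ac)
  qed
  also have "\<dots> \<le> norm h ^ m * (2/\<rho>) ^ m * (\<Sum>j. bnd c j * \<rho> ^ j)"
    by (rule tail_bound(2)[OF sb \<rho> h])
  finally show ?thesis .
qed

lemma hpoly_at0: "j > 0 \<Longrightarrow> hpoly c j 0 = 0"
  using hpoly_bound[of c j 0] bnd_nonneg[of c j] by (simp add: zero_power)

lemma hpoly0_const: "hpoly c 0 h = hpoly c 0 0"
  using hpoly_scale[of c 0 0 h] by simp

lemma deg1:
  assumes "sum \<alpha> (UNIV::'n::finite set) = 1"
  shows "\<exists>i. \<forall>h::real^'n. monomial_at \<alpha> 0 h = h$i"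
proof -
  obtain i where i: "\<alpha> i \<noteq> 0" using assms by (metis sum.neutral zero_neq_one)
  have split: "sum \<alpha> UNIV = \<alpha> i + sum \<alpha> (UNIV - {i})"
    by (simp add: sum.remove)
  then have "\<alpha> i = 1" "sum \<alpha> (UNIV - {i}) = 0" using assms i by linarith+
  then have z: "\<forall>k\<in>UNIV-{i}. \<alpha> k = 0" by simp
  have "monomial_at \<alpha> 0 h = h$i" for h :: "real^'n"
  proof -
    have "monomial_at \<alpha> 0 h = (h$i) ^ \<alpha> i * (\<Prod>k\<in>UNIV-{i}. (h$k) ^ \<alpha> k)"
      by (simp add: monomial_at_def prod.remove)
    also have "(\<Prod>k\<in>UNIV-{i}. (h$k) ^ \<alpha> k) = 1" using z by simp
    finally show ?thesis using \<open>\<alpha> i = 1\<close> by simp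
  qed
  then show ?thesis by blast
qed

lemma hpoly1_linear:
  fixes c :: "('n::finite \<Rightarrow> nat) \<Rightarrow> real"
  shows "bounded_linear (hpoly c 1)"
proof -
  have "bounded_linear (\<lambda>h. \<Sum>\<alpha>\<in>{\<alpha>::'n\<Rightarrow>nat. sum \<alpha> UNIV = 1}. c \<alpha> * monomial_at \<alpha> 0 (h::real^'n::finite))"
  proof (rule bounded_linear_sum)
    fix \<alpha> :: "'n \<Rightarrow> nat" assume "\<alpha> \<in> {\<alpha>::'n\<Rightarrow>nat. sum \<alpha> UNIV = 1}"
    then obtain i where i: "\<And>h::real^'n. monomial_at \<alpha> 0 h = h$i" using deg1[of \<alpha>] by auto
    have "bounded_linear (\<lambda>h::real^'n. c \<alpha> * h$i)"
      by (intro bounded_linear_mult_right[THEN bounded_linear_compose] bounded_linear_vec_nth)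
    then show "bounded_linear (\<lambda>h::real^'n. c \<alpha> * monomial_at \<alpha> 0 h)" by (simp add: i)
  qed
  then show ?thesis by (simp add: hpoly_def[abs_def])
qed


lemma analytic_differentiable:
  fixes f :: "real^'n::finite \<Rightarrow> real"
  assumes "real_analytic_at f a"
  shows "f differentiable (at a)"
proof -
  obtain \<rho> c where \<rho>: "\<rho> > 0" and sb: "summable (\<lambda>j. bnd c j * \<rho> ^ j)"
    and ser: "\<And>h. norm h < \<rho> \<Longrightarrow> (\<lambda>j. hpoly c j h) sums f (a + h)"
    apply (rule analytic_expansion[OF assms]) by (rule that)
  define A where "A = (\<Sum>j. bnd c j * \<rho> ^ j)"
  have A0: "A \<ge> 0" unfolding A_def using \<rho> by (intro suminf_nonneg sb) (simp add: bnd_nonneg)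
  have "(\<lambda>j. hpoly c j 0) sums f (a + 0)" using ser[of 0] \<rho> by simp
  moreover have "(\<lambda>j. hpoly c j 0) = (\<lambda>j. if j = 0 then hpoly c j 0 else 0)"
    by (rule ext) (simp add: hpoly_at0)
  ultimately have "(\<lambda>j. if j = 0 then hpoly c j 0 else 0) sums f a" by simp
  moreover have "(\<lambda>j. if j = 0 then hpoly c j 0 else 0) sums hpoly c 0 0"
    by (rule sums_single)
  ultimately have fa: "f a = hpoly c 0 0" by (rule sums_unique2)
  define C where "C = (2/\<rho>)^2 * A"
  have C0: "C \<ge> 0" using A0 \<rho> by (simp add: C_def)
  have rem: "\<bar>f (a + h) - f a - hpoly c 1 h\<bar> \<le> norm h ^ 2 * C" if h: "norm h \<le> \<rho>/2" for h
  proof -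
    have "norm h < \<rho>" using h \<rho> by linarith
    from sums_split_initial_segment[OF ser[OF this], of 2]
    have "(\<lambda>j. 1 * hpoly c (j+2) h) sums (f (a + h) - f a - hpoly c 1 h)"
      using fa hpoly0_const[of c h] by (simp add: numeral_2_eq_2 diff_diff_eq)
    from rem_bound[OF sb \<rho> h _ this] show ?thesis by (simp add: C_def A_def mult_ac)
  qed
  have "(f has_derivative hpoly c 1) (at a)"
    unfolding has_derivative_at_alt
  proof (intro conjI allI impI hpoly1_linear)
    fix e :: real assume e: "e > 0"
    define d where "d = min (\<rho>/2) (e/(C+1))"
    have d: "d > 0" using e \<rho> C0 by (simp add: d_def)
    have "\<forall>y. norm (y - a) < d \<longrightarrow> norm (f y - f a - hpoly c 1 (y - a)) \<le> e * norm (y - a)"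
    proof (intro allI impI)
      fix y assume y: "norm (y - a) < d"
      define h where "h = y - a"
      have yh: "y = a + h" by (simp add: h_def)
      have h1: "norm h \<le> \<rho>/2" using y by (simp add: h_def d_def)
      have h2: "norm h * C \<le> e"
      proof -
        have "norm h \<le> e/(C+1)" using y by (simp add: h_def d_def)
        then have "norm h * (C+1) \<le> e" using C0 by (simp add: field_simps)
        moreover have "norm h * C \<le> norm h * (C+1)" by (intro mult_left_mono) auto
        ultimately show ?thesis by linarith
      qed
      have "\<bar>f (a + h) - f a - hpoly c 1 h\<bar> \<le> norm h ^ 2 * C" by (rule rem[OF h1])
      also have "\<dots> = norm h * (norm h * C)" by (simp add: power2_eq_square mult_ac)
      also have "\<dots> \<le> norm h * e" by (intro mult_left_mono h2) auto
      finally show "norm (f y - f a - hpoly c 1 (y - a)) \<le> e * norm (y - a)"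
        by (simp add: yh h_def[symmetric] mult_ac)
    qed
    then show "\<exists>d>0. \<forall>y. norm (y - a) < d \<longrightarrow> norm (f y - f a - hpoly c 1 (y - a)) \<le> e * norm (y - a)"
      using d by blast
  qed
  then show ?thesis unfolding differentiable_def by blast
qed


lemma open_pos_measure:
  fixes A :: "'a::euclidean_space set"
  assumes "open A" "x \<in> A"
  shows "0 < emeasure lborel A"
proof -
  obtain a b where ab: "box a b \<subseteq> A" "x \<in> box a b" "\<forall>i\<in>Basis. a \<bullet> i < b \<bullet> i"
    by (rule open_contains_box[OF assms])
  have "(0::real) < (\<Prod>i\<in>Basis. (b - a) \<bullet> i)"
    using ab(3) by (intro prod_pos) (simp add: inner_diff_left)
  then have "0 < emeasure lborel (box a b)"
    using ab(3) unfolding emeasure_lborel_box_eq by (simp add: less_imp_le)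
  also have "\<dots> \<le> emeasure lborel A" by (rule emeasure_mono[OF ab(1)]) (simp add: assms borel_open)
  finally show ?thesis .
qed

lemma cone_integral_infinite:
  fixes Cn :: "(real^'n::finite) set"
  assumes op: "open Cn" and w: "\<omega> \<in> Cn" and w0: "\<omega> \<noteq> 0"
    and cone: "\<And>x t. x \<in> Cn \<Longrightarrow> t > 0 \<Longrightarrow> t *\<^sub>R x \<in> Cn"
    and \<delta>: "\<delta> > 0"
  shows "(\<integral>\<^sup>+x. indicator (Cn \<inter> ball 0 \<delta>) x * ennreal (1 / norm x ^ CARD('n)) \<partial>lborel) = \<infinity>"
proof -
  let ?n = "CARD('n)"
  define I where "I r = (\<integral>\<^sup>+x. indicator (Cn \<inter> ball 0 r) x * ennreal (1 / norm x ^ ?n) \<partial>lborel)" for r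
  have [measurable]: "Cn \<in> sets borel" using op by (simp add: borel_open)
  have [measurable]: "ball (0::real^'n) r \<in> sets borel" for r by (simp add: borel_open)
  have [measurable]: "(\<lambda>x::real^'n. norm x) \<in> borel_measurable borel" by (rule borel_measurable_norm)
  have meas: "(\<lambda>x. indicator (Cn \<inter> ball 0 r) x * ennreal (1 / norm x ^ ?n)) \<in> borel_measurable borel" for r :: real
    by measurable
  have scale: "I r = I (2 * r)" if r: "r > 0" for r
  proof -
    have "I r = (\<integral>\<^sup>+x. indicator (Cn \<inter> ball 0 r) x * ennreal (1 / norm x ^ ?n)
        \<partial>density (distr lborel borel (\<lambda>x. 0 + (1/2::real) *\<^sub>R x)) (\<lambda>_. \<bar>1/2::real\<bar> ^ DIM(real^'n)))"
      unfolding I_def by (subst lborel_affine[of "1/2::real" 0, symmetric]) simp_all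
    also have "\<dots> = (\<integral>\<^sup>+x. ennreal ((1/2) ^ ?n) * (indicator (Cn \<inter> ball 0 r) ((1/2::real) *\<^sub>R x) * ennreal (1 / norm ((1/2::real) *\<^sub>R x) ^ ?n)) \<partial>lborel)"
      using meas[of r] by (simp add: nn_integral_density nn_integral_distr)
    also have "\<dots> = I (2 * r)"
      unfolding I_def
    proof (intro nn_integral_cong)
      fix x :: "real^'n"
      have mem: "((1/2::real) *\<^sub>R x \<in> Cn) = (x \<in> Cn)"
        using cone[of x "1/2"] cone[of "(1/2::real) *\<^sub>R x" 2] by auto
      have bl: "((1/2::real) *\<^sub>R x \<in> ball 0 r) = (x \<in> ball 0 (2*r))" by auto
      have "ennreal ((1/2) ^ ?n) * ennreal (1 / norm ((1/2::real) *\<^sub>R x) ^ ?n) = ennreal (1 / norm x ^ ?n)"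
      proof (cases "x = 0")
        case True then show ?thesis by (simp add: power_0_left)
      next
        case False
        have "(1/2::real) ^ ?n * (1 / norm ((1/2::real) *\<^sub>R x) ^ ?n) = 1 / norm x ^ ?n"
          using False by (simp add: power_divide field_simps)
        then show ?thesis by (simp add: ennreal_mult'[symmetric])
      qed
      then show "ennreal ((1/2) ^ ?n) * (indicator (Cn \<inter> ball 0 r) ((1/2::real) *\<^sub>R x) * ennreal (1 / norm ((1/2::real) *\<^sub>R x) ^ ?n))
          = indicator (Cn \<inter> ball 0 (2*r)) x * ennreal (1 / norm x ^ ?n)"
        using mem bl by (simp add: indicator_def mult_ac)
    qed
    finally show ?thesis .
  qed
  define S where "S = Cn \<inter> (ball 0 (2*\<delta>) - ball 0 \<delta>)"
  have split: "I (2*\<delta>) = I \<delta> + (\<integral>\<^sup>+x. indicator S x * ennreal (1 / norm x ^ ?n) \<partial>lborel)"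
  proof -
    have "I (2*\<delta>) = (\<integral>\<^sup>+x. indicator (Cn \<inter> ball 0 \<delta>) x * ennreal (1 / norm x ^ ?n) + indicator S x * ennreal (1 / norm x ^ ?n) \<partial>lborel)"
      unfolding I_def
    proof (intro nn_integral_cong)
      fix x :: "real^'n"
      show "indicator (Cn \<inter> ball 0 (2*\<delta>)) x * ennreal (1 / norm x ^ ?n) = indicator (Cn \<inter> ball 0 \<delta>) x * ennreal (1 / norm x ^ ?n) + indicator S x * ennreal (1 / norm x ^ ?n)"
      proof (cases "x \<in> Cn \<and> norm x < 2*\<delta>")
        case True
        then show ?thesis using \<delta> by (cases "norm x < \<delta>") (auto simp: S_def indicator_def)
      next
        case False
        then show ?thesis using \<delta> by (auto simp: S_def indicator_def)
      qed
    qed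
    also have "\<dots> = I \<delta> + (\<integral>\<^sup>+x. indicator S x * ennreal (1 / norm x ^ ?n) \<partial>lborel)"
      unfolding I_def by (rule nn_integral_add) (use meas in \<open>auto simp: S_def\<close>)
    finally show ?thesis .
  qed
  have Spos: "0 < (\<integral>\<^sup>+x. indicator S x * ennreal (1 / norm x ^ ?n) \<partial>lborel)"
  proof -
    define y where "y = ((3/2) * \<delta> / norm \<omega>) *\<^sub>R \<omega>"
    have ny: "norm y = (3/2) * \<delta>" using w0 \<delta> by (simp add: y_def)
    define S' where "S' = Cn \<inter> (ball 0 (2*\<delta>) - cball 0 \<delta>)"
    have "y \<in> Cn" unfolding y_def using w0 \<delta> by (intro cone[OF w]) simp
    then have "y \<in> S'" using \<delta> ny by (simp add: S'_def)
    moreover have "open S'" unfolding S'_def by (intro open_Int op open_Diff open_ball closed_cball)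
    ultimately have "0 < emeasure lborel S'" by (rule open_pos_measure[rotated])
    also have "\<dots> \<le> emeasure lborel S"
      by (rule emeasure_mono) (auto simp: S'_def S_def borel_open op)
    finally have m: "0 < emeasure lborel S" .
    have [measurable]: "S \<in> sets borel" unfolding S_def using op by (auto simp: borel_open)
    have "(\<integral>\<^sup>+x. indicator S x * ennreal (1 / (2*\<delta>) ^ ?n) \<partial>lborel) \<le> (\<integral>\<^sup>+x. indicator S x * ennreal (1 / norm x ^ ?n) \<partial>lborel)"
    proof (intro nn_integral_mono)
      fix x :: "real^'n"
      show "indicator S x * ennreal (1 / (2*\<delta>) ^ ?n) \<le> indicator S x * ennreal (1 / norm x ^ ?n)"
      proof (cases "x \<in> S")
        case True
        then have "\<delta> \<le> norm x" "norm x < 2*\<delta>" by (auto simp: S_def)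
        then have "norm x ^ ?n \<le> (2*\<delta>) ^ ?n" by (intro power_mono) auto
        moreover have "0 < norm x ^ ?n" using \<open>\<delta> \<le> norm x\<close> \<delta> by (intro zero_less_power) linarith
        ultimately have "1 / (2*\<delta>) ^ ?n \<le> 1 / norm x ^ ?n" by (intro divide_left_mono) auto
        then show ?thesis using True by (simp add: ennreal_leI)
      qed simp
    qed
    moreover have "(\<integral>\<^sup>+x. indicator S x * ennreal (1 / (2*\<delta>) ^ ?n) \<partial>lborel) = ennreal (1 / (2*\<delta>) ^ ?n) * emeasure lborel S"
      by (subst nn_integral_multc) (auto simp: mult.commute)
    moreover have "0 < ennreal (1 / (2*\<delta>) ^ ?n) * emeasure lborel S"
      using m \<delta> by (simp add: ennreal_zero_less_mult_iff)
    ultimately show ?thesis by (simp add: order_less_le_trans)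
  qed
  have "I \<delta> = I \<delta> + (\<integral>\<^sup>+x. indicator S x * ennreal (1 / norm x ^ ?n) \<partial>lborel)"
    using scale[OF \<delta>] split by simp
  then have "I \<delta> + 0 = I \<delta> + (\<integral>\<^sup>+x. indicator S x * ennreal (1 / norm x ^ ?n) \<partial>lborel)" by simp
  then have "I \<delta> = \<infinity> \<or> 0 = (\<integral>\<^sup>+x. indicator S x * ennreal (1 / norm x ^ ?n) \<partial>lborel)"
    by (simp only: ennreal_add_left_cancel)
  then have "I \<delta> = \<infinity>" using Spos by auto
  then show ?thesis unfolding I_def .
qed


lemma grad_inner:
  fixes f :: "real^'n::finite \<Rightarrow> real"
  assumes "f differentiable (at x)"
  shows "frechet_derivative f (at x) x = grad f x \<bullet> x"
proof -
  let ?L = "frechet_derivative f (at x)"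
  have "(f has_derivative ?L) (at x)" using assms by (rule frechet_derivative_works[THEN iffD1])
  then have lin: "linear ?L" by (simp add: has_derivative_linear)
  have "?L x = ?L (\<Sum>i\<in>UNIV. (x$i) *\<^sub>R axis i 1)"
    using basis_expansion[of x] by (simp add: scalar_mult_eq_scaleR)
  also have "\<dots> = (\<Sum>i\<in>UNIV. (x$i) * ?L (axis i 1))"
    by (simp add: linear_sum[OF lin] linear_scale[OF lin])
  also have "\<dots> = grad f x \<bullet> x"
    by (simp add: grad_def inner_vec_def mult.commute)
  finally show ?thesis .
qed

lemma radial_deriv:
  fixes f :: "real^'n::finite \<Rightarrow> real"
  assumes \<rho>: "\<rho> > 0"
    and ser: "\<And>h. norm h < \<rho> \<Longrightarrow> (\<lambda>j. hpoly c j h) sums f (0 + h)"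
    and x: "norm x \<le> \<rho>/2" and diff: "f differentiable (at x)"
  shows "(\<lambda>n. real (Suc n) * hpoly c (Suc n) x) sums (frechet_derivative f (at x) x)"
proof -
  let ?L = "frechet_derivative f (at x)"
  define cc where "cc n = hpoly c n x" for n
  have st: "(\<lambda>n. cc n * t ^ n) sums f (t *\<^sub>R x)" if t: "norm t < 2" for t :: real
  proof -
    have "norm (t *\<^sub>R x) = \<bar>t\<bar> * norm x" by simp
    also have "\<dots> \<le> \<bar>t\<bar> * (\<rho>/2)" by (intro mult_left_mono x) auto
    also have "\<dots> < 2 * (\<rho>/2)" using t \<rho> by (intro mult_strict_right_mono) auto
    finally have "norm (t *\<^sub>R x) < \<rho>" by simp
    from ser[OF this] show ?thesis by (simp add: cc_def hpoly_scale mult.commute)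
  qed
  have sm: "summable (\<lambda>n. cc n * t ^ n)" if "norm t < 2" for t :: real
    using st[OF that] by (rule sums_summable)
  have d1: "DERIV (\<lambda>t. \<Sum>n. cc n * t ^ n) 1 :> (\<Sum>n. diffs cc n * 1 ^ n)"
    by (rule termdiffs_strong[of cc "3/2" 1]) (use sm[of "3/2"] in auto)
  have sd: "summable (\<lambda>n. diffs cc n * 1 ^ n)"
    by (rule termdiff_converges[of 1 2]) (use sm in auto)
  have d2: "DERIV (\<lambda>t. f (t *\<^sub>R x)) 1 :> (\<Sum>n. diffs cc n * 1 ^ n)"
  proof (rule has_field_derivative_transform_within_open[OF d1, of "ball 0 2"])
    fix t :: real assume "t \<in> ball 0 2"
    then have "norm t < 2" by simp
    from st[OF this] show "(\<Sum>n. cc n * t ^ n) = f (t *\<^sub>R x)" by (rule sums_unique[symmetric])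
  qed auto
  have "(f has_derivative ?L) (at x)" using diff by (rule frechet_derivative_works[THEN iffD1])
  then have lin: "linear ?L" by (simp add: has_derivative_linear)
  have "(f has_derivative ?L) (at ((\<lambda>t::real. t *\<^sub>R x) 1))"
    using \<open>(f has_derivative ?L) (at x)\<close> by simp
  moreover have "((\<lambda>t::real. t *\<^sub>R x) has_derivative (\<lambda>t. t *\<^sub>R x)) (at 1)"
    by (auto intro!: derivative_eq_intros)
  ultimately have "((\<lambda>t. f (t *\<^sub>R x)) has_derivative (\<lambda>t. ?L (t *\<^sub>R x))) (at 1)"
    using has_derivative_compose by blast
  moreover have "(\<lambda>t. ?L (t *\<^sub>R x)) = (*) (?L x)" by (rule ext) (simp add: linear_scale[OF lin] mult.commute)
  ultimately have "DERIV (\<lambda>t. f (t *\<^sub>R x)) 1 :> ?L x"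
    unfolding has_field_derivative_def by simp
  from DERIV_unique[OF d2 this] have "(\<Sum>n. diffs cc n * 1 ^ n) = ?L x" .
  with sd have "(\<lambda>n. diffs cc n * 1 ^ n) sums ?L x" by (metis summable_sums)
  then show ?thesis by (simp add: diffs_def cc_def)
qed


theorem theorem3p4:
  fixes f :: "real^'n \<Rightarrow> real" and D U :: "(real^'n) set"
  assumes "open D" and "0 \<in> D"
    and "real_analytic_on f D"
    and "f 0 = 0"
    and "\<forall>V. open V \<and> 0 \<in> V \<longrightarrow> (\<exists>x\<in>V \<inter> D. f x \<noteq> 0)"
    and "open U" and "0 \<in> U" and "U \<subseteq> D"
  shows "(\<integral>\<^sup>+ x\<in>U. ennreal ((norm (grad f x) / \<bar>f x\<bar>) ^ CARD('n)) \<partial>lborel) = \<infinity>"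
proof -
  note an = assms(3)[unfolded real_analytic_on_def]
  obtain \<rho> c where \<rho>: "\<rho> > 0" and sb: "summable (\<lambda>j. bnd c j * \<rho> ^ j)"
    and ser: "\<And>h. norm h < \<rho> \<Longrightarrow> (\<lambda>j. hpoly c j h) sums f (0 + h)"
    apply (rule analytic_expansion[OF an[rule_format, OF assms(2)]]) by (rule that)
  let ?P = "hpoly c"
  have ser0: "(\<lambda>j. ?P j h) sums f h" if "norm h < \<rho>" for h using ser[OF that] by simp
  obtain x0 where x0: "x0 \<in> ball 0 \<rho>" "f x0 \<noteq> 0"
    using assms(5)[rule_format, of "ball 0 \<rho>"] \<rho> by auto
  have ex: "\<exists>j. \<exists>x. ?P j x \<noteq> 0"
  proof (rule ccontr)
    assume "\<not> ?thesis"
    then have "(\<lambda>j. ?P j x0) = (\<lambda>j. 0)" by auto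
    moreover have "(\<lambda>j. ?P j x0) sums f x0" using x0 by (intro ser0) simp
    ultimately show False using x0 sums_zero sums_unique2 by metis
  qed
  define K where "K = (LEAST j. \<exists>x. ?P j x \<noteq> 0)"
  have PK: "\<exists>x. ?P K x \<noteq> 0" unfolding K_def by (rule LeastI_ex[OF ex])
  have Plow: "?P j x = 0" if "j < K" for j x
    using not_less_Least[OF that[unfolded K_def]] by auto
  have f0: "(\<lambda>j. ?P j 0) sums f 0" using ser0[of 0] \<rho> by simp
  have "(\<lambda>j. ?P j 0) = (\<lambda>j. if j = 0 then ?P j 0 else 0)"
    by (rule ext) (simp add: hpoly_at0)
  with f0 have "(\<lambda>j. if j = 0 then ?P j 0 else 0) sums f 0" by simp
  moreover have "(\<lambda>j. if j = 0 then ?P j 0 else 0) sums ?P 0 0" by (rule sums_single)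
  ultimately have "?P 0 0 = 0" using assms(4) sums_unique2 by metis
  then have "?P 0 x = 0" for x using hpoly0_const[of c x] by simp
  then have Kpos: "K > 0" using PK by (cases K) auto
  obtain \<omega> where \<omega>: "?P K \<omega> \<noteq> 0" using PK by blast
  have \<omega>0: "\<omega> \<noteq> 0" using \<omega> hpoly_at0[OF Kpos] by auto
  define m where "m = \<bar>?P K \<omega>\<bar> / norm \<omega> ^ K / 2"
  have m: "m > 0" using \<omega> \<omega>0 by (simp add: m_def)
  define Cn where "Cn = {x. m * norm x ^ K < \<bar>?P K x\<bar>}"
  have opC: "open Cn" unfolding Cn_def
    by (intro open_Collect_less continuous_intros hpoly_cont)
  have wC: "\<omega> \<in> Cn" using \<omega> \<omega>0 by (simp add: Cn_def m_def)
  have coneC: "t *\<^sub>R x \<in> Cn" if "x \<in> Cn" "t > 0" for x t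
  proof -
    have "t ^ K * (m * norm x ^ K) < t ^ K * \<bar>?P K x\<bar>"
      using that by (intro mult_strict_left_mono) (auto simp: Cn_def)
    then show ?thesis using that by (simp add: Cn_def hpoly_scale abs_mult power_abs power_mult_distrib mult_ac)
  qed
  have C0notin: "0 \<notin> Cn" by (simp add: Cn_def hpoly_at0[OF Kpos] zero_power[OF Kpos] )
  define A where "A = (\<Sum>j. bnd c j * \<rho> ^ j)"
  have A0: "A \<ge> 0" unfolding A_def using \<rho> by (intro suminf_nonneg sb) (simp add: bnd_nonneg)
  define C where "C = (2/\<rho>) ^ (K+1) * A"
  have C0: "C \<ge> 0" using A0 \<rho> by (simp add: C_def)
  define B where "B = bnd c K"
  have B0: "B \<ge> 0" by (simp add: B_def bnd_nonneg)
  obtain eU where eU: "eU > 0" "ball 0 eU \<subseteq> U" using assms(6,7) open_contains_ball by blast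
  define \<delta> where "\<delta> = min (\<rho>/2) (min eU (m / (2 * (C+1))))"
  have \<delta>: "\<delta> > 0" using \<rho> eU m C0 by (simp add: \<delta>_def)
  define c0 where "c0 = m / (2 * (B + m))"
  have c0: "c0 > 0" using m B0 by (simp add: c0_def)
  let ?n = "CARD('n)"
  have key: "ennreal (c0 ^ ?n) * ennreal (1 / norm x ^ ?n) \<le> ennreal ((norm (grad f x) / \<bar>f x\<bar>) ^ ?n)"
    if xG: "x \<in> Cn \<inter> ball 0 \<delta>" for x
  proof -
    define s where "s = norm x"
    have xC: "x \<in> Cn" and sd: "s < \<delta>" using xG by (auto simp: s_def)
    have x0: "x \<noteq> 0" using xC C0notin by auto
    have s0: "s > 0" using x0 by (simp add: s_def)
    have s\<rho>: "norm x \<le> \<rho>/2" using sd by (simp add: s_def \<delta>_def)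
    have s\<rho>': "norm x < \<rho>" using s\<rho> \<rho> by linarith
    have "x \<in> U" using sd eU by (auto simp: s_def \<delta>_def)
    then have "x \<in> D" using assms(8) by auto
    then have diff: "f differentiable (at x)" using an analytic_differentiable by blast
    have sumK: "(\<Sum>i<Suc K. ?P i x) = ?P K x" using Plow by simp
    from sums_split_initial_segment[OF ser0[OF s\<rho>'], of "K+1"]
    have "(\<lambda>j. 1 * ?P (j + (K+1)) x) sums (f x - ?P K x)" using sumK by simp
    from rem_bound[OF sb \<rho> s\<rho> _ this] have F: "\<bar>f x - ?P K x\<bar> \<le> s ^ (K+1) * C"
      by (simp add: s_def C_def A_def mult_ac)
    define Lx where "Lx = frechet_derivative f (at x) x"
    have Ls: "(\<lambda>n. real (Suc n) * ?P (Suc n) x) sums Lx"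
      unfolding Lx_def by (rule radial_deriv[OF \<rho> ser s\<rho> diff])
    obtain K0 where K0: "K = Suc K0" using Kpos by (cases K) auto
    have sumL: "(\<Sum>i<K. real (Suc i) * ?P (Suc i) x) = real K * ?P K x"
      using Plow by (simp add: K0)
    from sums_split_initial_segment[OF Ls, of K]
    have "(\<lambda>j. real (j + (K+1)) * ?P (j + (K+1)) x) sums (Lx - real K * ?P K x)"
      using sumL by (simp add: add.commute)
    from rem_bound[OF sb \<rho> s\<rho> _ this] have L: "\<bar>Lx - real K * ?P K x\<bar> \<le> s ^ (K+1) * C"
      by (simp add: s_def C_def A_def mult_ac)
    have G: "\<bar>Lx\<bar> \<le> norm (grad f x) * s"
      unfolding Lx_def grad_inner[OF diff] s_def by (rule Cauchy_Schwarz_ineq2)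
    define q where "q = s ^ K"
    have q0: "q > 0" using s0 by (simp add: q_def)
    have sK1: "s ^ (K+1) = s * q" by (simp add: q_def)
    have P1: "m * q < \<bar>?P K x\<bar>" using xC by (simp add: Cn_def q_def s_def)
    have P2: "\<bar>?P K x\<bar> \<le> B * q" using hpoly_bound[of c K x] by (simp add: B_def q_def s_def)
    have h6: "s * C \<le> m/2"
    proof -
      have "s < m / (2 * (C+1))" using sd by (simp add: \<delta>_def)
      then have "s * (2 * (C+1)) < m" using C0 by (simp add: field_simps)
      moreover have "s * C \<le> s * (C+1)" using s0 by simp
      ultimately show ?thesis by linarith
    qed
    have e1: "s ^ (K+1) * C \<le> q * (m/2)"
      unfolding sK1 using q0 h6 by (simp add: mult.assoc mult.left_commute[of q] mult_left_mono)
    have mq: "0 \<le> q * m" using q0 m by simp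
    have hq: "q * (m/2) = (m * q) / 2" "q * m = m * q" by simp_all
    have Flow: "q * (m/2) < \<bar>f x\<bar>" using F e1 P1 hq by linarith
    have Fup: "\<bar>f x\<bar> \<le> (B + m) * q" using F e1 P2 mq by (simp add: algebra_simps)
    have "1 * \<bar>?P K x\<bar> \<le> real K * \<bar>?P K x\<bar>" using Kpos by (intro mult_right_mono) auto
    then have KP: "\<bar>?P K x\<bar> \<le> \<bar>real K * ?P K x\<bar>" by (simp add: abs_mult)
    have Llow: "q * (m/2) < \<bar>Lx\<bar>" using L e1 P1 KP hq by linarith
    have Gl: "(q * (m/2)) / s \<le> norm (grad f x)"
      using Llow G s0 by (simp add: pos_divide_le_eq)
    have "((q * (m/2)) / s) / ((B + m) * q) \<le> norm (grad f x) / \<bar>f x\<bar>"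
    proof (rule frac_le)
      show "0 \<le> norm (grad f x)" by simp
      show "q * (m/2) / s \<le> norm (grad f x)" by (rule Gl)
      show "0 < \<bar>f x\<bar>" using Flow mq by linarith
      show "\<bar>f x\<bar> \<le> (B + m) * q" by (rule Fup)
    qed
    moreover have "((q * (m/2)) / s) / ((B + m) * q) = c0 / s"
    proof -
      define u where "u = B + m"
      have u: "u > 0" using m B0 by (simp add: u_def)
      have "((q * (m/2)) / s) / (u * q) = m / (2 * u) / s" using q0 s0 u by (simp add: field_simps)
      then show ?thesis by (simp add: u_def c0_def)
    qed
    ultimately have rat: "c0 / s \<le> norm (grad f x) / \<bar>f x\<bar>" by simp
    have "(c0 / s) ^ ?n \<le> (norm (grad f x) / \<bar>f x\<bar>) ^ ?n"
      using c0 s0 by (intro power_mono rat) simp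
    moreover have "(c0 / s) ^ ?n = c0 ^ ?n * (1 / norm x ^ ?n)" by (simp add: s_def power_divide)
    ultimately have "c0 ^ ?n * (1 / norm x ^ ?n) \<le> (norm (grad f x) / \<bar>f x\<bar>) ^ ?n" by simp
    then have "ennreal (c0 ^ ?n * (1 / norm x ^ ?n)) \<le> ennreal ((norm (grad f x) / \<bar>f x\<bar>) ^ ?n)"
      by (rule ennreal_leI)
    then show ?thesis using c0 by (simp add: ennreal_mult[symmetric])
  qed
  have [measurable]: "Cn \<in> sets borel" using opC by (simp add: borel_open)
  have [measurable]: "ball (0::real^'n) r \<in> sets borel" for r by (simp add: borel_open)
  have [measurable]: "(\<lambda>x::real^'n. norm x) \<in> borel_measurable borel" by (rule borel_measurable_norm)
  have meas: "(\<lambda>x. indicator (Cn \<inter> ball 0 \<delta>) x * ennreal (1 / norm x ^ ?n)) \<in> borel_measurable lborel"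
    by measurable
  have "(\<integral>\<^sup>+x. ennreal (c0 ^ ?n) * (indicator (Cn \<inter> ball 0 \<delta>) x * ennreal (1 / norm x ^ ?n)) \<partial>lborel)
        \<le> (\<integral>\<^sup>+ x\<in>U. ennreal ((norm (grad f x) / \<bar>f x\<bar>) ^ ?n) \<partial>lborel)"
  proof (intro nn_integral_mono)
    fix x :: "real^'n"
    show "ennreal (c0 ^ ?n) * (indicator (Cn \<inter> ball 0 \<delta>) x * ennreal (1 / norm x ^ ?n))
        \<le> ennreal ((norm (grad f x) / \<bar>f x\<bar>) ^ ?n) * indicator U x"
    proof (cases "x \<in> Cn \<inter> ball 0 \<delta>")
      case True
      then have "x \<in> U" using eU by (auto simp: \<delta>_def)
      then show ?thesis using key[OF True] True by (simp add: mult.assoc)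
    qed simp
  qed
  moreover have "(\<integral>\<^sup>+x. ennreal (c0 ^ ?n) * (indicator (Cn \<inter> ball 0 \<delta>) x * ennreal (1 / norm x ^ ?n)) \<partial>lborel) = \<infinity>"
  proof -
    have "(\<integral>\<^sup>+x. ennreal (c0 ^ ?n) * (indicator (Cn \<inter> ball 0 \<delta>) x * ennreal (1 / norm x ^ ?n)) \<partial>lborel)
        = ennreal (c0 ^ ?n) * (\<integral>\<^sup>+x. indicator (Cn \<inter> ball 0 \<delta>) x * ennreal (1 / norm x ^ ?n) \<partial>lborel)"
      by (rule nn_integral_cmult[OF meas])
    also have "(\<integral>\<^sup>+x. indicator (Cn \<inter> ball 0 \<delta>) x * ennreal (1 / norm x ^ ?n) \<partial>lborel) = \<infinity>"
      by (rule cone_integral_infinite[OF opC wC \<omega>0 coneC \<delta>])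
    finally show ?thesis using c0 by (simp add: ennreal_mult_eq_top_iff)
  qed
  ultimately show ?thesis by (simp add: top_unique)
qed

end
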